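(* Let $\mathcal G$ satisfy the Compactness, Convexity, Continuity and Symmetry assumptions. Then for every constant $M\ge0$, \[ \inf_{W\in\mathbb R^n}\sup_{g\in\mathcal G}J_\lambda(W,g)\le\sup_{g\in\mathcal G}\inf_{\|W\|\le M}B(W,g)^2+\frac{\lambda}{n^2}M^2 . \]
   Context: Setting: finite state space $\mathcal S$, actions $[m]$, confounder space $\mathcal U$; data $Z_i=(S_i,A_i,S_i')$, $i\in[n]$, with unobserved confounders $U_i$; $\pi_e(a\mid s,u)$ an evaluation policy; $d(S)$ the stationary state density ratio; conditional expectations are under the behavior stationary distribution. For $W\in\mathbb R^n$ and $g=(g_1,\dots,g_m)$, $g_a:\mathcal S\times\mathcal U\to\mathbb R$: $f_{ia}=W_i\delta_{A_ia}-d(S_i)\pi_e(a\mid S_i,U_i)$, $B(W,g)=\frac1n\sum_i\sum_a\mathbb E[f_{ia}g_a(S_i,U_i)\mid Z_i]$, $J_\lambda(W,g)=B(W,g)^2+\frac{\lambda}{n^2}\|W\|^2$ with $\lambda\ge0$. $\mathcal G$ is a normed class of such $g$, $\mathcal G^*=\{g/\|g\|:g\in\mathcal G,\|g\|>0\}$, $h_g(z)=\mathbb E[g_A(S,U)\mid Z=z]$, $k_g(z)=\mathbb E[d(S)\sum_a\pi_e(a\mid S,U)g_a(S,U)\mid Z=z]$. Compactness: $\mathcal G$ and $\mathcal G^*$ compact. Convexity: $\mathcal G$ convex. Continuity: $h_g(z)$ and $k_g(z)$ continuous in $g$ for every $z$, and $g_a(s,u)$ continuous in $(s,u)$. Symmetry: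 $g\in\mathcal G\iff-g\in\mathcal G$. *)

theory Defs
  imports "HOL-Probability.Probability"
begin

(* Data point z = (s, a, s') : state, action, next state.
   Actions are indexed by {..<m}.
   A class element g (of an abstract normed space 'g) represents the tuple of functions
   (g_a)_{a<m} via the evaluation map evl:  g_a(s,u) = evl g a s u.
   K z is the conditional law of the unobserved confounder U given Z = z
   (under the behaviour stationary distribution), so E[phi(U) | Z = z] = integral over K z. *)

definition hfun :: "('g \<Rightarrow> nat \<Rightarrow> 's \<Rightarrow> 'u \<Rightarrow> real) \<Rightarrow> ('s \<times> nat \<times> 's \<Rightarrow> 'u measure)
    \<Rightarrow> 'g \<Rightarrow> 's \<times> nat \<times> 's \<Rightarrow> real" where
  "hfun evl K g z = (case z of (s, a, s') \<Rightarrow> \<integral>u. evl g a s u \<partial>K z)"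

definition kfun :: "('g \<Rightarrow> nat \<Rightarrow> 's \<Rightarrow> 'u \<Rightarrow> real) \<Rightarrow> ('s \<times> nat \<times> 's \<Rightarrow> 'u measure)
    \<Rightarrow> ('s \<Rightarrow> real) \<Rightarrow> (nat \<Rightarrow> 's \<Rightarrow> 'u \<Rightarrow> real) \<Rightarrow> nat
    \<Rightarrow> 'g \<Rightarrow> 's \<times> nat \<times> 's \<Rightarrow> real" where
  "kfun evl K d pe m g z =
     (case z of (s, a, s') \<Rightarrow> \<integral>u. d s * (\<Sum>b<m. pe b s u * evl g b s u) \<partial>K z)"

definition ffun :: "('s \<Rightarrow> real) \<Rightarrow> (nat \<Rightarrow> 's \<Rightarrow> 'u \<Rightarrow> real) \<Rightarrow> ('n \<Rightarrow> 's \<times> nat \<times> 's)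
    \<Rightarrow> real ^ 'n \<Rightarrow> 'n \<Rightarrow> nat \<Rightarrow> 'u \<Rightarrow> real" where
  "ffun d pe Z W i a u =
     W $ i * (if fst (snd (Z i)) = a then 1 else 0) - d (fst (Z i)) * pe a (fst (Z i)) u"

definition Bfun :: "('g \<Rightarrow> nat \<Rightarrow> 's \<Rightarrow> 'u \<Rightarrow> real) \<Rightarrow> ('s \<times> nat \<times> 's \<Rightarrow> 'u measure)
    \<Rightarrow> ('s \<Rightarrow> real) \<Rightarrow> (nat \<Rightarrow> 's \<Rightarrow> 'u \<Rightarrow> real) \<Rightarrow> nat \<Rightarrow> ('n::finite \<Rightarrow> 's \<times> nat \<times> 's)
    \<Rightarrow> real ^ 'n \<Rightarrow> 'g \<Rightarrow> real" where
  "Bfun evl K d pe m Z W g =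
     (1 / real CARD('n)) * (\<Sum>i\<in>UNIV. \<Sum>a<m.
        \<integral>u. ffun d pe Z W i a u * evl g a (fst (Z i)) u \<partial>K (Z i))"

definition Jfun :: "('g \<Rightarrow> nat \<Rightarrow> 's \<Rightarrow> 'u \<Rightarrow> real) \<Rightarrow> ('s \<times> nat \<times> 's \<Rightarrow> 'u measure)
    \<Rightarrow> ('s \<Rightarrow> real) \<Rightarrow> (nat \<Rightarrow> 's \<Rightarrow> 'u \<Rightarrow> real) \<Rightarrow> nat \<Rightarrow> ('n::finite \<Rightarrow> 's \<times> nat \<times> 's)
    \<Rightarrow> real \<Rightarrow> real ^ 'n \<Rightarrow> 'g \<Rightarrow> real" where
  "Jfun evl K d pe m Z lam W g =
     (Bfun evl K d pe m Z W g)\<^sup>2 + lam / (real CARD('n))\<^sup>2 * (norm W)\<^sup>2"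

definition normalized_class :: "'g::real_normed_vector set \<Rightarrow> 'g set" where
  "normalized_class G = (\<lambda>g. g /\<^sub>R norm g) ` {g \<in> G. norm g > 0}"

end

theory Submission
  imports Defs
begin

theorem lemma4:
  fixes evl :: "'g::real_normed_vector \<Rightarrow> nat \<Rightarrow> 's::finite \<Rightarrow> 'u::topological_space \<Rightarrow> real"
    and K :: "'s \<times> nat \<times> 's \<Rightarrow> 'u measure"
    and d :: "'s \<Rightarrow> real"
    and pe :: "nat \<Rightarrow> 's \<Rightarrow> 'u \<Rightarrow> real"
    and m :: nat
    and Z :: "'n::finite \<Rightarrow> 's \<times> nat \<times> 's"
    and G :: "'g set"
    and lam M :: real
  assumes evl_linear: "\<And>a s u. linear (\<lambda>g. evl g a s u)" and evl_inj: "inj evl"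
    and K_prob: "\<And>z. prob_space (K z)"
    and K_sets: "\<And>z. sets (K z) = sets borel"
    and actions: "\<And>i. fst (snd (Z i)) < m"
    and integrable_g: "\<And>g i a. g \<in> G \<Longrightarrow> a < m \<Longrightarrow>
          integrable (K (Z i)) (\<lambda>u. evl g a (fst (Z i)) u)"
    and integrable_pe: "\<And>g i a. g \<in> G \<Longrightarrow> a < m \<Longrightarrow>
          integrable (K (Z i)) (\<lambda>u. pe a (fst (Z i)) u * evl g a (fst (Z i)) u)"
    and compactness: "compact G" "compact (normalized_class G)"
    and convexity: "convex G"
    and continuity_h: "\<And>z. continuous_on G (\<lambda>g. hfun evl K g z)"
    and continuity_k: "\<And>z. continuous_on G (\<lambda>g. kfun evl K d pe m g z)"
    and continuity_g: "\<And>g a s. g \<in> G \<Longrightarrow> continuous_on UNIV (\<lambda>u. evl g a s u)"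
    and symmetry: "\<And>g. g \<in> G \<longleftrightarrow> - g \<in> G"
    and lam_nonneg: "lam \<ge> 0"
    and M_nonneg: "M \<ge> 0"
  shows "Inf (range (\<lambda>W. Sup ((\<lambda>g. Jfun evl K d pe m Z lam W g) ` G)))
           \<le> Sup ((\<lambda>g. Inf ((\<lambda>W. (Bfun evl K d pe m Z W g)\<^sup>2) ` cball 0 M)) ` G)
             + lam / (real CARD('n))\<^sup>2 * M\<^sup>2"
proof -
  define n where "n = real CARD('n)"
  have npos: "n > 0" unfolding n_def by simp
  define hv where "hv g = (\<chi> i. hfun evl K g (Z i))" for g
  define kv where "kv g = (\<Sum>i\<in>UNIV. kfun evl K d pe m g (Z i))" for g
  define av where "av g = (hv g /\<^sub>R n, kv g / n)" for g
  let ?B = "Bfun evl K d pe m Z"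
  let ?J = "Jfun evl K d pe m Z lam"
  have Beq: "?B W g = inner W (fst (av g)) - snd (av g)" if g: "g \<in> G" for W g
  proof -
    have per_i: "(\<Sum>a<m. \<integral>u. ffun d pe Z W i a u * evl g a (fst (Z i)) u \<partial>K (Z i))
        = W $ i * hfun evl K g (Z i) - kfun evl K d pe m g (Z i)" for i
    proof -
      obtain s a0 s' where zi: "Z i = (s, a0, s')" by (cases "Z i") auto
      have a0m: "a0 < m" using actions[of i] zi by simp
      have "(\<Sum>a<m. \<integral>u. ffun d pe Z W i a u * evl g a (fst (Z i)) u \<partial>K (Z i))
         = (\<Sum>a<m. (W $ i * (if a0 = a then 1 else 0)) * (\<integral>u. evl g a s u \<partial>K (Z i))
              - d s * (\<integral>u. pe a s u * evl g a s u \<partial>K (Z i)))"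
      proof (rule sum.cong[OF refl])
        fix a assume "a \<in> {..<m}"
        then have am: "a < m" by simp
        have i1: "integrable (K (Z i)) (\<lambda>u. evl g a s u)" using integrable_g[OF g am, of i] zi by simp
        have i2: "integrable (K (Z i)) (\<lambda>u. pe a s u * evl g a s u)" using integrable_pe[OF g am, of i] zi by simp
        have "(\<lambda>u. ffun d pe Z W i a u * evl g a (fst (Z i)) u)
           = (\<lambda>u. (W $ i * (if a0 = a then 1 else 0)) * evl g a s u - d s * (pe a s u * evl g a s u))"
          by (rule ext) (simp add: ffun_def zi algebra_simps)
        then show "(\<integral>u. ffun d pe Z W i a u * evl g a (fst (Z i)) u \<partial>K (Z i))
           = (W $ i * (if a0 = a then 1 else 0)) * (\<integral>u. evl g a s u \<partial>K (Z i))
              - d s * (\<integral>u. pe a s u * evl g a s u \<partial>K (Z i))"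
          using i1 i2 by simp
      qed
      also have "\<dots> = (\<Sum>a<m. (W $ i * (if a0 = a then 1 else 0)) * (\<integral>u. evl g a s u \<partial>K (Z i)))
              - (\<Sum>a<m. d s * (\<integral>u. pe a s u * evl g a s u \<partial>K (Z i)))"
        by (simp add: sum_subtractf)
      also have "(\<Sum>a<m. (W $ i * (if a0 = a then 1 else 0)) * (\<integral>u. evl g a s u \<partial>K (Z i)))
          = W $ i * hfun evl K g (Z i)"
      proof -
        have "(\<Sum>a<m. (W $ i * (if a0 = a then 1 else 0)) * (\<integral>u. evl g a s u \<partial>K (Z i)))
           = (\<Sum>a<m. if a = a0 then W $ i * (\<integral>u. evl g a s u \<partial>K (Z i)) else 0)"
          by (rule sum.cong) auto
        also have "\<dots> = W $ i * (\<integral>u. evl g a0 s u \<partial>K (Z i))" using a0m by simp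
        finally show ?thesis by (simp add: hfun_def zi)
      qed
      also have "(\<Sum>a<m. d s * (\<integral>u. pe a s u * evl g a s u \<partial>K (Z i)))
          = kfun evl K d pe m g (Z i)"
      proof -
        have e1: "(\<integral>u. (\<Sum>b<m. pe b s u * evl g b s u) \<partial>K (Z i)) = (\<Sum>b<m. \<integral>u. pe b s u * evl g b s u \<partial>K (Z i))"
          by (rule Bochner_Integration.integral_sum[where f="\<lambda>b u. pe b s u * evl g b s u"])
            (use integrable_pe[OF g, of _ i] zi in auto)
        have e2: "kfun evl K d pe m g (Z i) = d s * (\<integral>u. (\<Sum>b<m. pe b s u * evl g b s u) \<partial>K (Z i))"
          by (simp add: kfun_def zi)
        show ?thesis unfolding e2 e1 by (simp add: sum_distrib_left)
      qed
      finally show ?thesis .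
    qed
    have "?B W g = (1 / n) * (\<Sum>i\<in>UNIV. W $ i * hfun evl K g (Z i) - kfun evl K d pe m g (Z i))"
      unfolding Bfun_def n_def using per_i by simp
    also have "\<dots> = inner W (fst (av g)) - snd (av g)"
      apply (simp add: av_def hv_def kv_def inner_vec_def sum_subtractf sum_divide_distrib[symmetric] diff_divide_distrib)
      apply (simp add: sum_divide_distrib divide_inverse ac_simps sum_distrib_left)
      done
    finally show ?thesis .
  qed
  have ev_add: "evl (x + y) a s u = evl x a s u + evl y a s u" for x y a s u
    using linear_add[OF evl_linear[of a s u]] by simp
  have ev_scale: "evl (c *\<^sub>R x) a s u = c * evl x a s u" for c :: real and x a s u
    using linear_scale[OF evl_linear[of a s u]] by simp
  have ev_neg: "evl (- x) a s u = - evl x a s u" for x a s u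
    using linear_neg[OF evl_linear[of a s u]] by simp
  have hfun_neg: "hfun evl K (- g) z = - hfun evl K g z" for g z
    by (cases z) (simp add: hfun_def ev_neg)
  have kfun_neg: "kfun evl K d pe m (- g) z = - kfun evl K d pe m g z" for g z
    by (cases z) (simp add: kfun_def ev_neg sum_negf)
  have av_neg: "av (- g) = - av g" for g
    by (simp add: av_def hv_def kv_def hfun_neg kfun_neg vec_eq_iff sum_negf)
  have hfun_comb: "hfun evl K (u *\<^sub>R g1 + v *\<^sub>R g2) (Z i) = u * hfun evl K g1 (Z i) + v * hfun evl K g2 (Z i)"
    if "g1 \<in> G" "g2 \<in> G" for u v g1 g2 i
  proof -
    obtain s a0 s' where zi: "Z i = (s, a0, s')" by (cases "Z i") auto
    have a0m: "a0 < m" using actions[of i] zi by simp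
    have i1: "integrable (K (Z i)) (\<lambda>x. evl g1 a0 s x)" using integrable_g[OF that(1) a0m, of i] zi by simp
    have i2: "integrable (K (Z i)) (\<lambda>x. evl g2 a0 s x)" using integrable_g[OF that(2) a0m, of i] zi by simp
    have "(\<integral>x. evl (u *\<^sub>R g1 + v *\<^sub>R g2) a0 s x \<partial>K (Z i))
        = (\<integral>x. u * evl g1 a0 s x + v * evl g2 a0 s x \<partial>K (Z i))"
      by (simp add: ev_add ev_scale)
    also have "\<dots> = u * (\<integral>x. evl g1 a0 s x \<partial>K (Z i)) + v * (\<integral>x. evl g2 a0 s x \<partial>K (Z i))"
      using i1 i2 by simp
    finally show ?thesis by (simp add: hfun_def zi)
  qed
  have kfun_comb: "kfun evl K d pe m (u *\<^sub>R g1 + v *\<^sub>R g2) (Z i)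
      = u * kfun evl K d pe m g1 (Z i) + v * kfun evl K d pe m g2 (Z i)"
    if "g1 \<in> G" "g2 \<in> G" for u v g1 g2 i
  proof -
    obtain s a0 s' where zi: "Z i = (s, a0, s')" by (cases "Z i") auto
    have i1: "integrable (K (Z i)) (\<lambda>x. d s * (\<Sum>b<m. pe b s x * evl g1 b s x))"
      using integrable_pe[OF that(1), of _ i] zi by (intro integrable_mult_right integrable_sum) auto
    have i2: "integrable (K (Z i)) (\<lambda>x. d s * (\<Sum>b<m. pe b s x * evl g2 b s x))"
      using integrable_pe[OF that(2), of _ i] zi by (intro integrable_mult_right integrable_sum) auto
    have "(\<integral>x. d s * (\<Sum>b<m. pe b s x * evl (u *\<^sub>R g1 + v *\<^sub>R g2) b s x) \<partial>K (Z i))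
        = (\<integral>x. u * (d s * (\<Sum>b<m. pe b s x * evl g1 b s x)) + v * (d s * (\<Sum>b<m. pe b s x * evl g2 b s x)) \<partial>K (Z i))"
      by (simp add: ev_add ev_scale algebra_simps sum.distrib sum_distrib_left)
    also have "\<dots> = u * (\<integral>x. d s * (\<Sum>b<m. pe b s x * evl g1 b s x) \<partial>K (Z i))
        + v * (\<integral>x. d s * (\<Sum>b<m. pe b s x * evl g2 b s x) \<partial>K (Z i))"
      using i1 i2 by (subst Bochner_Integration.integral_add) auto
    finally show ?thesis by (simp add: kfun_def zi)
  qed
  have av_comb: "av (u *\<^sub>R g1 + v *\<^sub>R g2) = u *\<^sub>R av g1 + v *\<^sub>R av g2"
    if "g1 \<in> G" "g2 \<in> G" for u v g1 g2
    using hfun_comb[OF that] kfun_comb[OF that]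
    by (simp add: av_def hv_def kv_def vec_eq_iff sum.distrib sum_distrib_left add_divide_distrib algebra_simps)
  have av_cont: "continuous_on G av"
    unfolding av_def hv_def kv_def
    by (intro continuous_intros continuity_h continuity_k) (use npos in auto)
  have convA: "convex (av ` G)"
  proof (rule convexI)
    fix x y and u v :: real assume x: "x \<in> av ` G" and y: "y \<in> av ` G" and uv: "0 \<le> u" "0 \<le> v" "u + v = 1"
    then obtain g1 g2 where g1: "g1 \<in> G" "x = av g1" and g2: "g2 \<in> G" "y = av g2" by auto
    have "u *\<^sub>R g1 + v *\<^sub>R g2 \<in> G" using convexity g1 g2 uv by (auto dest: convexD)
    then show "u *\<^sub>R x + v *\<^sub>R y \<in> av ` G" using av_comb[OF g1(1) g2(1)] g1 g2 by (metis image_eqI)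
  qed
  have Cnn: "lam / (real CARD('n))\<^sup>2 * M\<^sup>2 \<ge> 0" using lam_nonneg by simp
  show ?thesis
  proof (cases "G = {}")
    case True
    then show ?thesis using Cnn by simp
  next
    case False
    then obtain g0 where g0: "g0 \<in> G" by auto
    have cA: "compact (av ` G)" by (rule compact_continuous_image[OF av_cont compactness(1)])
    then obtain Cb where Cb: "\<And>x. x \<in> av ` G \<Longrightarrow> norm x \<le> Cb"
      using compact_imp_bounded bounded_iff by metis
    have Cc: "norm (fst (av g)) \<le> Cb" if "g \<in> G" for g
      using Cb[of "av g"] that norm_fst_le[of "fst (av g)" "snd (av g)"] by auto
    have Cbb: "\<bar>snd (av g)\<bar> \<le> Cb" if "g \<in> G" for g
      using Cb[of "av g"] that norm_snd_le[of "snd (av g)" "fst (av g)"] by auto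
    define Q where "Q g = Inf ((\<lambda>W. (?B W g)\<^sup>2) ` cball 0 M)" for g
    define R where "R = Sup (Q ` G)"
    have bddQ: "bdd_below ((\<lambda>W. (?B W g)\<^sup>2) ` cball 0 M)" for g
      by (rule bdd_belowI[of _ 0]) auto
    have Qup: "Q g \<le> (snd (av g))\<^sup>2" if "g \<in> G" for g
    proof -
      have "Q g \<le> (?B 0 g)\<^sup>2" unfolding Q_def
        by (rule cInf_lower[OF _ bddQ]) (use M_nonneg in auto)
      then show ?thesis using Beq[OF that, of 0] by simp
    qed
    have Qlow: "(max 0 (\<bar>snd (av g)\<bar> - M * norm (fst (av g))))\<^sup>2 \<le> Q g" if "g \<in> G" for g
      unfolding Q_def
    proof (rule cInf_greatest)
      show "(\<lambda>W. (?B W g)\<^sup>2) ` cball 0 M \<noteq> {}" using M_nonneg by auto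
    next
      fix y assume "y \<in> (\<lambda>W. (?B W g)\<^sup>2) ` cball 0 M"
      then obtain W where W: "norm W \<le> M" "y = (?B W g)\<^sup>2" by auto
      have cs: "\<bar>inner W (fst (av g))\<bar> \<le> norm W * norm (fst (av g))" by (rule Cauchy_Schwarz_ineq2)
      have "norm W * norm (fst (av g)) \<le> M * norm (fst (av g))" using W(1) by (simp add: mult_right_mono)
      then have "max 0 (\<bar>snd (av g)\<bar> - M * norm (fst (av g))) \<le> \<bar>?B W g\<bar>"
        using cs Beq[OF that, of W] by auto
      then show "(max 0 (\<bar>snd (av g)\<bar> - M * norm (fst (av g))))\<^sup>2 \<le> y"
        using W(2) by (metis abs_le_square_iff abs_of_nonneg max.cobounded1 order_trans)
    qed
    have bddQG: "bdd_above (Q ` G)"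
    proof (rule bdd_aboveI[of _ "Cb\<^sup>2"])
      fix y assume "y \<in> Q ` G"
      then obtain g where g: "g \<in> G" "y = Q g" by auto
      have "(snd (av g))\<^sup>2 \<le> Cb\<^sup>2" using Cbb[OF g(1)] by (metis abs_le_square_iff abs_of_nonneg abs_ge_zero order_trans)
      then show "y \<le> Cb\<^sup>2" using Qup[OF g(1)] g(2) by simp
    qed
    have QR: "Q g \<le> R" if "g \<in> G" for g unfolding R_def by (rule cSup_upper) (use that bddQG in auto)
    have R0: "0 \<le> R" using QR[OF g0] Qlow[OF g0] by (meson order_trans zero_le_power2)
    define t where "t = sqrt R"
    have t0: "0 \<le> t" unfolding t_def using R0 by simp
    have F1: "\<bar>snd (av g)\<bar> - M * norm (fst (av g)) \<le> t" if "g \<in> G" for g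
    proof -
      have "(max 0 (\<bar>snd (av g)\<bar> - M * norm (fst (av g))))\<^sup>2 \<le> R" using Qlow[OF that] QR[OF that] by linarith
      then have "max 0 (\<bar>snd (av g)\<bar> - M * norm (fst (av g))) \<le> t" unfolding t_def
        using real_le_rsqrt by blast
      then show ?thesis by linarith
    qed
    define S where "S = {p :: (real ^ 'n) \<times> real. M * norm (fst p) + snd p < - t}"
    have convS: "convex S"
    proof (rule convexI)
      fix x y :: "(real ^ 'n) \<times> real" and u v :: real
      assume x: "x \<in> S" and y: "y \<in> S" and uv: "0 \<le> u" "0 \<le> v" "u + v = 1"
      have "norm (fst (u *\<^sub>R x + v *\<^sub>R y)) \<le> u * norm (fst x) + v * norm (fst y)"
        using uv norm_triangle_ineq[of "u *\<^sub>R fst x" "v *\<^sub>R fst y"] by simp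
      then have "M * norm (fst (u *\<^sub>R x + v *\<^sub>R y)) \<le> u * (M * norm (fst x)) + v * (M * norm (fst y))"
        using M_nonneg by (metis (no_types, opaque_lifting) distrib_left mult.left_commute mult_left_mono)
      moreover have "u * (M * norm (fst x) + snd x) + v * (M * norm (fst y) + snd y) < - t"
      proof -
        have a: "M * norm (fst x) + snd x < - t" "M * norm (fst y) + snd y < - t" using x y unfolding S_def by auto
        show ?thesis
        proof (cases "u = 0")
          case True then show ?thesis using a uv by simp
        next
          case False
          then have "u > 0" using uv by simp
          then have "u * (M * norm (fst x) + snd x) < u * (- t)" using a by (intro mult_strict_left_mono) auto
          moreover have "v * (M * norm (fst y) + snd y) \<le> v * (- t)" using a uv by (intro mult_left_mono) auto
          ultimately show ?thesis using uv by (metis add_less_le_mono distrib_right mult_1 mult.commute)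
        qed
      qed
      ultimately show "u *\<^sub>R x + v *\<^sub>R y \<in> S" unfolding S_def by (simp add: algebra_simps)
    qed
    have "(0, - t - 1) \<in> S" unfolding S_def by simp
    then have Sne: "S \<noteq> {}" by blast
    have disj: "S \<inter> av ` G = {}"
    proof (rule ccontr)
      assume "S \<inter> av ` G \<noteq> {}"
      then obtain g where g: "g \<in> G" "av g \<in> S" by auto
      then show False using F1[OF g(1)] unfolding S_def by auto
    qed
    obtain w \<beta> where w: "w \<noteq> 0" and wS: "\<forall>x\<in>S. inner w x \<le> \<beta>" and wA: "\<forall>x\<in>av ` G. \<beta> \<le> inner w x"
      using separating_hyperplane_sets[OF convS convA Sne _ disj] g0 by blast
    define u where "u = fst w"
    define \<alpha> where "\<alpha> = snd w"
    have w_eq: "w = (u, \<alpha>)" by (simp add: u_def \<alpha>_def)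
    have hS: "inner u c + \<alpha> * b \<le> \<beta>" if "M * norm c + b < - t" for c b
      using wS that unfolding S_def w_eq by auto
    have hA: "\<beta> \<le> inner u (fst (av g)) + \<alpha> * snd (av g)" if "g \<in> G" for g
      using wA that unfolding w_eq by (cases "av g") auto
    have a0: "\<alpha> \<ge> 0"
    proof (rule ccontr)
      assume "\<not> \<alpha> \<ge> 0"
      then have an: "\<alpha> < 0" by simp
      define s where "s = (\<bar>\<beta>\<bar> + \<bar>\<alpha> * (t + 1)\<bar> + 1) / (- \<alpha>)"
      have s0: "s \<ge> 0" unfolding s_def using an by (intro divide_nonneg_pos) auto
      have "\<alpha> * (- t - 1 - s) \<le> \<beta>" using hS[of 0 "- t - 1 - s"] s0 by simp
      moreover have "- \<alpha> * s = \<bar>\<beta>\<bar> + \<bar>\<alpha> * (t + 1)\<bar> + 1" unfolding s_def using an by simp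
      ultimately show False by (simp add: algebra_simps)
    qed
    have an0: "\<alpha> \<noteq> 0"
    proof
      assume a: "\<alpha> = 0"
      have "u = 0"
      proof (rule ccontr)
        assume "u \<noteq> 0"
        then have nu: "inner u u > 0" by simp
        define s where "s = (\<bar>\<beta>\<bar> + 1) / inner u u"
        have "inner u (s *\<^sub>R u) \<le> \<beta>" using hS[of "s *\<^sub>R u" "- t - 1 - M * norm (s *\<^sub>R u)"] a by simp
        moreover have "inner u (s *\<^sub>R u) = \<bar>\<beta>\<bar> + 1" unfolding s_def using nu by simp
        ultimately show False by linarith
      qed
      then show False using w a w_eq by (simp add: zero_prod_def)
    qed
    have apos: "\<alpha> > 0" using a0 an0 by simp
    define W where "W = - (1 / \<alpha>) *\<^sub>R u"
    have uW: "u = - \<alpha> *\<^sub>R W" unfolding W_def using apos by simp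
    have Wn: "norm W \<le> M"
    proof (rule ccontr)
      assume "\<not> norm W \<le> M"
      then have big: "norm W > M" by simp
      then have k0: "norm W * (norm W - M) > 0" using M_nonneg by (intro mult_pos_pos) auto
      define C where "C = \<beta> / \<alpha> + t + 1"
      define s where "s = (\<bar>C\<bar> + 1) / (norm W * (norm W - M))"
      have s0: "s > 0" unfolding s_def using k0 by simp
      have "inner u (- s *\<^sub>R W) + \<alpha> * (- t - 1 - M * norm (- s *\<^sub>R W)) \<le> \<beta>"
        by (rule hS) simp
      then have "\<alpha> * (s * (norm W * norm W)) + \<alpha> * (- t - 1 - M * (s * norm W)) \<le> \<beta>"
        using s0 by (simp add: uW inner_commute power2_norm_eq_inner[symmetric] power2_eq_square ac_simps)
      then have "\<alpha> * (s * (norm W * (norm W - M)) - t - 1) \<le> \<beta>" by (simp add: algebra_simps)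
      then have "s * (norm W * (norm W - M)) - t - 1 \<le> \<beta> / \<alpha>" using apos by (simp add: field_simps)
      moreover have "s * (norm W * (norm W - M)) = \<bar>C\<bar> + 1" unfolding s_def using k0 by (metis less_irrefl nonzero_eq_divide_eq mult.commute)
      ultimately show False unfolding C_def by linarith
    qed
    have tb: "- \<beta> / \<alpha> \<le> t"
    proof (rule field_le_epsilon)
      fix e :: real assume e: "e > 0"
      have "\<alpha> * (- t - e) \<le> \<beta>" using hS[of 0 "- t - e"] e by simp
      then show "- \<beta> / \<alpha> \<le> t + e" using apos by (simp add: field_simps)
    qed
    have Bt: "?B W g \<le> t" if "g \<in> G" for g
    proof -
      have "\<beta> \<le> - \<alpha> * inner W (fst (av g)) + \<alpha> * snd (av g)" using hA[OF that] by (simp add: uW)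
      then have "inner W (fst (av g)) - snd (av g) \<le> - \<beta> / \<alpha>" using apos by (simp add: field_simps)
      then show ?thesis using Beq[OF that] tb by simp
    qed
    have B2: "(?B W g)\<^sup>2 \<le> R" if "g \<in> G" for g
    proof -
      have "- g \<in> G" using symmetry that by simp
      then have "?B W (- g) \<le> t" by (rule Bt)
      then have "- ?B W g \<le> t" using Beq[OF that] Beq[OF \<open>- g \<in> G\<close>] av_neg by simp
      then have "\<bar>?B W g\<bar> \<le> t" using Bt[OF that] by simp
      then have "(?B W g)\<^sup>2 \<le> t\<^sup>2" by (metis abs_le_square_iff abs_of_nonneg t0)
      then show ?thesis unfolding t_def using R0 by simp
    qed
    have JW: "?J W g \<le> R + lam / (real CARD('n))\<^sup>2 * M\<^sup>2" if "g \<in> G" for g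
    proof -
      have "(norm W)\<^sup>2 \<le> M\<^sup>2" using Wn by (simp add: power_mono)
      then have "lam / (real CARD('n))\<^sup>2 * (norm W)\<^sup>2 \<le> lam / (real CARD('n))\<^sup>2 * M\<^sup>2"
        using lam_nonneg by (intro mult_left_mono) auto
      then show ?thesis using B2[OF that] unfolding Jfun_def by simp
    qed
    have supW: "Sup (?J W ` G) \<le> R + lam / (real CARD('n))\<^sup>2 * M\<^sup>2"
      by (rule cSup_least) (use False JW in auto)
    have bddJ: "bdd_above (?J V ` G)" for V
    proof (rule bdd_aboveI[of _ "(norm V * Cb + Cb)\<^sup>2 + lam / (real CARD('n))\<^sup>2 * (norm V)\<^sup>2"])
      fix y assume "y \<in> ?J V ` G"
      then obtain g where g: "g \<in> G" "y = ?J V g" by auto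
      have "\<bar>inner V (fst (av g))\<bar> \<le> norm V * norm (fst (av g))" by (rule Cauchy_Schwarz_ineq2)
      also have "\<dots> \<le> norm V * Cb" using Cc[OF g(1)] by (simp add: mult_left_mono)
      finally have "\<bar>?B V g\<bar> \<le> norm V * Cb + Cb" using Cbb[OF g(1)] Beq[OF g(1)] by simp
      then have "(?B V g)\<^sup>2 \<le> (norm V * Cb + Cb)\<^sup>2"
        by (metis abs_le_square_iff abs_of_nonneg abs_ge_zero order_trans)
      then show "y \<le> (norm V * Cb + Cb)\<^sup>2 + lam / (real CARD('n))\<^sup>2 * (norm V)\<^sup>2"
        using g(2) unfolding Jfun_def by simp
    qed
    have bddI: "bdd_below (range (\<lambda>V. Sup (?J V ` G)))"
    proof (rule bdd_belowI[of _ 0])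
      fix y assume "y \<in> range (\<lambda>V. Sup (?J V ` G))"
      then obtain V where V: "y = Sup (?J V ` G)" by auto
      have "?J V g0 \<le> Sup (?J V ` G)" by (rule cSup_upper) (use g0 bddJ in auto)
      moreover have "0 \<le> ?J V g0" unfolding Jfun_def using lam_nonneg by simp
      ultimately show "0 \<le> y" using V by simp
    qed
    have "Inf (range (\<lambda>V. Sup (?J V ` G))) \<le> Sup (?J W ` G)"
      by (rule cInf_lower[OF _ bddI]) simp
    also have "\<dots> \<le> R + lam / (real CARD('n))\<^sup>2 * M\<^sup>2" by (rule supW)
    finally show ?thesis unfolding R_def Q_def .
  qed
qed

end
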